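(* Let $n\geq 3$ be odd and write $a\oplus 1$ for addition modulo $n$ on indices in $\{1,\dots,n\}$. (i) For any Hilbert space and any Hermitian operators $\bar X_1,\dots,\bar X_n$ with $\bar X_a^2=\mathbf{1}$ and $[\bar X_a,\bar X_{a\oplus1}]=0$ for all $a$, one has $$\sum_{a=1}^n \bar X_a\bar X_{a\oplus 1}\;\geq\; n\Big(1-\frac{4\cos(\pi/n)}{1+\cos(\pi/n)}\Big)\mathbf{1}.$$ (ii) This bound is attained: in $\mathbb{C}^3$ let $|l_a\rangle=(\sin\theta\cos\varphi_a,\sin\theta\sin\varphi_a,\cos\theta)$ with $\varphi_a=\frac{n-1}{n}\pi a$ and $\cos^2\theta=\cos(\pi/n)/(1+\cos(\pi/n))$. Then $\langle l_a|l_{a\oplus1}\rangle=0$ for all $a$; with $\hat X_a=|l_a\rangle\langle l_a|$, $\bar X_a=2\hat X_a-\mathbf{1}$ and the state $|\psi\rangle=(0,0,1)$, the expectation of $\sum_a\bar X_a\bar X_{a\oplus1}$ equals $n-\frac{4n\cos(\pi/n)}{1+\cos(\pi/n)}$, and for each $a$ the probability that a joint measurement of the commuting projectors $\hat X_a,\hat X_{a\oplus1}$ yields anti-correlated outcomes equals $\frac{2\cos(\pi/n)}{1+\cos(\pi/n)}$. For $n\geq 5$ this probability exceeds $1-\frac1n$.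
   Context: The value $1-\frac1n$ is the maximal average probability of anti-correlation of adjacent pairs in a ring of $n$ (odd) binary variables that all have fixed values. *)

theory Defs
  imports "HOL-Analysis.Analysis"
begin

definition hnorm :: "('h \<Rightarrow> 'h \<Rightarrow> complex) \<Rightarrow> 'h \<Rightarrow> real" where
  "hnorm ip x = sqrt (Re (ip x x))"

definition hilbert_space ::
  "(complex \<Rightarrow> 'h::ab_group_add \<Rightarrow> 'h) \<Rightarrow> ('h \<Rightarrow> 'h \<Rightarrow> complex) \<Rightarrow> bool" where
  "hilbert_space sc ip \<longleftrightarrow>
     vector_space sc \<and>
     (\<forall>x y. ip x y = cnj (ip y x)) \<and>
     (\<forall>x y z. ip x (y + z) = ip x y + ip x z) \<and>
     (\<forall>c x y. ip x (sc c y) = c * ip x y) \<and>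
     (\<forall>x. 0 \<le> Re (ip x x)) \<and>
     (\<forall>x. ip x x = 0 \<longrightarrow> x = 0) \<and>
     (\<forall>f :: nat \<Rightarrow> 'h.
        (\<forall>e>0. \<exists>N. \<forall>m\<ge>N. \<forall>k\<ge>N. hnorm ip (f m - f k) < e) \<longrightarrow>
        (\<exists>L. \<forall>e>0. \<exists>N. \<forall>m\<ge>N. hnorm ip (f m - L) < e))"

definition hermitian_op ::
  "(complex \<Rightarrow> 'h::ab_group_add \<Rightarrow> 'h) \<Rightarrow> ('h \<Rightarrow> 'h \<Rightarrow> complex) \<Rightarrow> ('h \<Rightarrow> 'h) \<Rightarrow> bool" where
  "hermitian_op sc ip A \<longleftrightarrow> Vector_Spaces.linear sc sc A \<and> (\<forall>x y. ip (A x) y = ip x (A y))"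

definition cyc_succ :: "nat \<Rightarrow> nat \<Rightarrow> nat" where
  "cyc_succ n a = a mod n + 1"

definition braket :: "complex^3 \<Rightarrow> complex^3 \<Rightarrow> complex" where
  "braket u v = (\<Sum>i\<in>UNIV. cnj (u $ i) * v $ i)"

definition ket_l :: "real \<Rightarrow> real \<Rightarrow> complex^3" where
  "ket_l \<theta> \<phi> = vector [complex_of_real (sin \<theta> * cos \<phi>), complex_of_real (sin \<theta> * sin \<phi>),
                        complex_of_real (cos \<theta>)]"

definition phi_angle :: "nat \<Rightarrow> nat \<Rightarrow> real" where
  "phi_angle n a = (real n - 1) / real n * pi * real a"

definition proj :: "complex^3 \<Rightarrow> complex^3^3" where
  "proj u = (\<chi> i j. u $ i * cnj (u $ j))"

definition obs :: "complex^3^3 \<Rightarrow> complex^3^3" where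
  "obs P = (\<chi> i j. 2 * P $ i $ j - (if i = j then 1 else 0))"

definition expect :: "complex^3^3 \<Rightarrow> complex^3 \<Rightarrow> complex" where
  "expect M \<psi> = braket \<psi> (M *v \<psi>)"

definition psi0 :: "complex^3" where
  "psi0 = vector [0, 0, 1]"

text \<open>Born-rule probability that a joint measurement of commuting projectors P, Q
gives anti-correlated outcomes (1,0) or (0,1).\<close>
definition anticorr_prob :: "complex^3^3 \<Rightarrow> complex^3^3 \<Rightarrow> complex^3 \<Rightarrow> complex" where
  "anticorr_prob P Q \<psi> = expect (P ** (mat 1 - Q) + (mat 1 - P) ** Q) \<psi>"

end

theory Submission
  imports Defs
begin


lemma trig_sum: "sin (x - t) + sin (x + t) = 2 * cos t * sin (x::real)"
  by (simp add: sin_diff sin_add)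

lemma trig_prod: "sin (x - t) * sin (x + t) = (sin (x::real))^2 - (sin t)^2"
proof -
  have "sin (x - t) * sin (x + t) = (sin x * cos t)^2 - (cos x * sin t)^2"
    by (simp add: sin_diff sin_add power2_eq_square algebra_simps)
  also have "\<dots> = (sin x)^2 - (sin t)^2"
    using sin_cos_squared_add[of x] sin_cos_squared_add[of t]
    by (simp add: power_mult_distrib cos_squared_eq algebra_simps)
  finally show ?thesis .
qed

lemma cyc_ineq:
  fixes G :: "'h::ab_group_add \<Rightarrow> 'h \<Rightarrow> real" and sm :: "real \<Rightarrow> 'h \<Rightarrow> 'h"
    and s :: "nat \<Rightarrow> 'h" and n :: nat
  assumes sym: "\<And>x y. G x y = G y x"
    and addL: "\<And>x y z. G (x + y) z = G x z + G y z"
    and smL: "\<And>r x y. G (sm r x) y = r * G x y"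
    and pos: "\<And>x. G x x \<ge> 0"
    and odd: "odd n" and n3: "n \<ge> 3"
  shows "(\<Sum>a=1..n. cos (pi / real n) * G (s a) (s a) + G (s a) (s (cyc_succ n a))) \<ge> 0"
proof -
  have addR: "\<And>x y z. G x (y + z) = G x y + G x z" using sym addL by metis
  have smR: "\<And>r x y. G x (sm r y) = r * G x y" using sym smL by metis
  define t where "t = pi / real n"
  define c where "c = cos t"
  have tpos: "t > 0" using n3 by (simp add: t_def)
  have nt: "real n * t = pi" using n3 by (simp add: t_def)
  have sinpos: "sin (real k * t) > 0" if "1 \<le> k" "k \<le> n - 1" for k
  proof -
    have "real k * t < real n * t" using that n3 tpos by (intro mult_strict_right_mono) auto
    then show ?thesis using that tpos nt by (intro sin_gt_zero) auto
  qed
  have st: "sin t > 0"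
  proof -
    have "1 \<le> n - 1" using n3 by simp
    then show ?thesis using sinpos[of 1] by simp
  qed
  define g where "g k = sin (real (k+1) * t) / (2 * sin (real k * t))" for k
  define h where "h k = (-1)^(k-1) * sin t / sin (real k * t)" for k
  define F where "F a = g a * (G (s a) (s a) + G (s n) (s n)) + G (s a) (s (a+1))
     + h a * G (s a) (s n) + (\<Sum>b=a+1..n-1. c * G (s b) (s b) + G (s b) (s (b+1)))" for a
  have base: "F (n-1) = 0"
  proof -
    have g0: "g (n-1) = 0" using n3 nt by (simp add: g_def of_nat_diff)
    have "sin (real (n-1) * t) = sin t"
    proof -
      have "real (n-1) * t = pi - t" using n3 nt by (simp add: of_nat_diff algebra_simps)
      then show ?thesis by simp
    qed
    moreover have "(-1::real)^(n-1-1) = -1" using odd n3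
    proof -
      have "odd (n - 1 - 1)" using odd n3 by (auto elim!: oddE simp: algebra_simps)
      then show ?thesis by simp
    qed
    moreover have "sin t \<noteq> 0"
    proof -
      have "1 \<le> n - 1" using n3 by simp
      then show ?thesis using sinpos[of 1] by simp
    qed
    ultimately have "h (n-1) = -1" by (simp add: h_def)
    moreover have "n - 1 + 1 = n" using n3 by simp
    ultimately show ?thesis using g0 by (simp add: F_def)
  qed
  have step: "F a = g a * G v v + F (a+1)"
    if a1: "1 \<le> a" and a2: "a \<le> n - 2"
      and v: "v = s a + sm (1 / (2 * g a)) (s (a+1) + sm (h a) (s n))" for a v
  proof -
    define S0 where "S0 = sin (real a * t)"
    define S1 where "S1 = sin (real (a+1) * t)"
    define S2 where "S2 = sin (real (a+2) * t)"
    have S0p: "S0 > 0" unfolding S0_def by (rule sinpos) (use a1 a2 n3 in auto)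
    have S1p: "S1 > 0" unfolding S1_def by (rule sinpos) (use a1 a2 n3 in auto)
    have e1: "S0 + S2 = 2 * c * S1"
      using trig_sum[of "real (a+1) * t" t] unfolding S0_def S1_def S2_def c_def
      by (simp add: algebra_simps)
    have e2: "S0 * S2 = S1^2 - (sin t)^2"
      using trig_prod[of "real (a+1) * t" t] unfolding S0_def S1_def S2_def c_def
      by (simp add: algebra_simps)
    have ga: "g a = S1 / (2 * S0)" by (simp add: g_def S0_def S1_def)
    have ga1: "g (a+1) = S2 / (2 * S1)" by (simp add: g_def S2_def S1_def add.assoc)
    obtain \<sigma> :: real where sg: "\<sigma> = (-1)^(a-1)" by blast
    have sg2: "(-1::real)^(a+1-1) = - \<sigma>" using a1 sg
      by (metis (no_types) Suc_diff_le add_diff_cancel_right' diff_Suc_1 mult_minus1 plus_1_eq_Suc power_Suc)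
    have ha: "h a = \<sigma> * sin t / S0" by (simp add: h_def sg S0_def)
    have ha1: "h (a+1) = - \<sigma> * sin t / S1" using sg2 by (simp add: h_def S1_def)
    have sum_split: "(\<Sum>b=a+1..n-1. c * G (s b) (s b) + G (s b) (s (b+1)))
        = c * G (s (a+1)) (s (a+1)) + G (s (a+1)) (s (a+2)) + (\<Sum>b=a+2..n-1. c * G (s b) (s b) + G (s b) (s (b+1)))"
      using a2 n3 by (subst sum.atLeast_Suc_atMost) (auto simp: numeral_2_eq_2)
    have Gvv: "G v v = G (s a) (s a) + 2 * (1 / (2 * g a)) * (G (s a) (s (a+1)) + h a * G (s a) (s n))
        + (1 / (2 * g a))^2 * (G (s (a+1)) (s (a+1)) + 2 * h a * G (s (a+1)) (s n) + (h a)^2 * G (s n) (s n))"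
    proof -
      have q1: "G (s (Suc a)) (s a) = G (s a) (s (Suc a))" "G (s n) (s (Suc a)) = G (s (Suc a)) (s n)"
        "G (s n) (s a) = G (s a) (s n)" using sym by auto
      have gnz: "g a \<noteq> 0" using S0p S1p ga by simp
      show ?thesis unfolding v using gnz by (simp add: addL addR smL smR q1 power2_eq_square field_simps)
    qed
    have gnz: "g a \<noteq> 0" using S0p S1p ga by simp
    have s2: "\<sigma>^2 = 1" using sg by (simp add: power_mult[symmetric] mult.commute)
    have k1: "c - 1/(4 * g a) - g (a+1) = 0"
    proof -
      have e1': "S2 = 2 * c * S1 - S0" using e1 by simp
      show ?thesis unfolding ga ga1 e1' using S0p S1p by (simp add: field_simps)
    qed
    have k2: "- h a / (2 * g a) - h (a+1) = 0"
      unfolding ga ha ha1 using S0p S1p by (simp add: field_simps)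
    have k3: "g a - (h a)^2 / (4 * g a) - g (a+1) = 0"
      unfolding ga ga1 ha using S0p S1p e2 s2 apply (simp add: field_simps power2_eq_square)
      by algebra
    have "F a - (g a * G v v + F (a+1)) = (c - 1/(4 * g a) - g (a+1)) * G (s (a+1)) (s (a+1))
       + (- h a / (2 * g a) - h (a+1)) * G (s (a+1)) (s n) + (g a - (h a)^2 / (4 * g a) - g (a+1)) * G (s n) (s n)"
      unfolding F_def sum_split Gvv using gnz by (simp add: field_simps power2_eq_square)
    then show ?thesis using k1 k2 k3 by simp
  qed
  have gpos: "g a \<ge> 0" if "1 \<le> a" "a \<le> n - 2" for a
  proof -
    have "sin (real (a+1) * t) > 0" by (rule sinpos) (use that n3 in auto)
    moreover have "sin (real a * t) > 0" by (rule sinpos) (use that n3 in auto)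
    ultimately show ?thesis by (simp add: g_def)
  qed
  have Fpos: "\<forall>a. 1 \<le> a \<and> a \<le> n - 1 \<and> n - 1 - a = k \<longrightarrow> F a \<ge> 0" for k
  proof (induction k)
    case 0
    show ?case
    proof (intro allI impI)
      fix a assume "1 \<le> a \<and> a \<le> n - 1 \<and> n - 1 - a = 0"
      then have "a = n - 1" by auto
      then show "F a \<ge> 0" using base by simp
    qed
  next
    case (Suc k)
    show ?case
    proof (intro allI impI)
      fix a assume a: "1 \<le> a \<and> a \<le> n - 1 \<and> n - 1 - a = Suc k"
      define v where "v = s a + sm (1 / (2 * g a)) (s (a+1) + sm (h a) (s n))"
      have "F a = g a * G v v + F (a+1)" using a by (intro step[OF _ _ v_def]) auto
      moreover have "F (a+1) \<ge> 0" using a by (intro Suc.IH[rule_format, of "a+1"]) auto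
      moreover have "g a * G v v \<ge> 0" using gpos[of a] a pos[of v] by auto
      ultimately show "F a \<ge> 0" by simp
    qed
  qed
  have F1: "F 1 \<ge> 0" using Fpos[of "n - 2"] n3 by auto
  have g1: "g 1 = c" using st by (simp add: g_def c_def sin_double)
  have h1: "h 1 = 1" using st by (simp add: h_def)
  have cyc1: "cyc_succ n a = a + 1" if "a < n" for a using that by (simp add: cyc_succ_def)
  have cycn: "cyc_succ n n = 1" by (simp add: cyc_succ_def)
  have "(\<Sum>a=1..n. c * G (s a) (s a) + G (s a) (s (cyc_succ n a)))
      = (\<Sum>a=1..n-1. c * G (s a) (s a) + G (s a) (s (cyc_succ n a))) + (c * G (s n) (s n) + G (s n) (s 1))"
  proof -
    have "{1..n} = insert n {1..n-1}" using n3 by auto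
    then show ?thesis using cycn n3 by (simp add: add.commute)
  qed
  also have "(\<Sum>a=1..n-1. c * G (s a) (s a) + G (s a) (s (cyc_succ n a)))
      = (\<Sum>a=1..n-1. c * G (s a) (s a) + G (s a) (s (a+1)))"
    using n3 by (intro sum.cong) (auto simp: cyc1)
  also have "\<dots> = c * G (s 1) (s 1) + G (s 1) (s 2) + (\<Sum>a=2..n-1. c * G (s a) (s a) + G (s a) (s (a+1)))"
    using n3 by (subst sum.atLeast_Suc_atMost) (auto simp: numeral_2_eq_2)
  finally have "(\<Sum>a=1..n. c * G (s a) (s a) + G (s a) (s (cyc_succ n a))) = F 1"
    unfolding F_def g1 h1 using sym[of "s n" "s 1"] by (simp add: algebra_simps numeral_2_eq_2)
  then show ?thesis using F1 by (simp add: c_def t_def)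
qed


lemma hs_facts:
  assumes H: "hilbert_space sc ip"
  shows hs_sym: "Re (ip x y) = Re (ip y x)"
    and hs_addR: "ip x (y + z) = ip x y + ip x z"
    and hs_addL: "ip (x + y) z = ip x z + ip y z"
    and hs_diffR: "ip x (y - z) = ip x y - ip x z"
    and hs_diffL: "ip (x - y) z = ip x z - ip y z"
    and hs_smL: "Re (ip (sc (complex_of_real r) x) y) = r * Re (ip x y)"
    and hs_pos: "Re (ip x x) \<ge> 0"
proof -
  note HH = H[unfolded hilbert_space_def]
  note cj = HH[THEN conjunct2, THEN conjunct1, rule_format]
  note aR = HH[THEN conjunct2, THEN conjunct2, THEN conjunct1, rule_format]
  note sR = HH[THEN conjunct2, THEN conjunct2, THEN conjunct2, THEN conjunct1, rule_format]
  note ps = HH[THEN conjunct2, THEN conjunct2, THEN conjunct2, THEN conjunct2, THEN conjunct1, rule_format]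
  show "Re (ip x y) = Re (ip y x)" using cj[of x y] by simp
  show aR': "ip x (y + z) = ip x y + ip x z" for x y z by (rule aR)
  show aL: "ip (x + y) z = ip x z + ip y z" for x y z
    using cj[of "x+y" z] aR[of z x y] cj[of z x] cj[of z y] by simp
  show "ip x (y - z) = ip x y - ip x z" using aR[of x "y - z" z] by (simp add: algebra_simps)
  show "ip (x - y) z = ip x z - ip y z" using aL[of "x - y" y z] by (simp add: algebra_simps)
  show "Re (ip (sc (complex_of_real r) x) y) = r * Re (ip x y)"
    using cj[of "sc (complex_of_real r) x" y] sR[of y "complex_of_real r" x] cj[of y x] by simp
  show "Re (ip x x) \<ge> 0" by (rule ps)
qed

lemma cyc_reindex:
  assumes "n \<ge> 1"
  shows "(\<Sum>a=1..n. f (cyc_succ n a)) = (\<Sum>a=1..n. (f a :: real))"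
proof -
  have "bij_betw (cyc_succ n) {1..n} {1..n}"
  proof (rule bij_betw_imageI)
    show "inj_on (cyc_succ n) {1..n}"
    proof
      fix a b assume "a \<in> {1..n}" "b \<in> {1..n}" "cyc_succ n a = cyc_succ n b"
      then show "a = b" unfolding cyc_succ_def
        by (cases "a = n"; cases "b = n") auto
    qed
    show "cyc_succ n ` {1..n} = {1..n}"
    proof
      show "cyc_succ n ` {1..n} \<subseteq> {1..n}" using assms
        by (auto simp: cyc_succ_def) (meson Suc_leI assms less_le_trans mod_less_divisor zero_less_one)
      show "{1..n} \<subseteq> cyc_succ n ` {1..n}"
      proof
        fix b assume b: "b \<in> {1..n}"
        show "b \<in> cyc_succ n ` {1..n}"
        proof (cases "b = 1")
          case True
          then have "cyc_succ n n = b" by (simp add: cyc_succ_def)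
          then show ?thesis using assms by force
        next
          case False
          then have "cyc_succ n (b - 1) = b" using b by (auto simp: cyc_succ_def)
          moreover have "b - 1 \<in> {1..n}" using b False by auto
          ultimately show ?thesis by force
        qed
      qed
    qed
  qed
  then show ?thesis by (rule sum.reindex_bij_betw)
qed

lemma theta_bound:
  fixes w :: "nat \<Rightarrow> 'h::ab_group_add"
  assumes H: "hilbert_space sc ip" and odd: "odd n" and n3: "n \<ge> 3"
    and E1: "\<And>a. a \<in> {1..n} \<Longrightarrow> Re (ip (w a) (w a)) = 4 * Re (ip \<psi> (w a))"
    and E2: "\<And>a. a \<in> {1..n} \<Longrightarrow> Re (ip (w a) (w (cyc_succ n a))) = 0"
  shows "(\<Sum>a=1..n. Re (ip \<psi> (w a))) \<le> 4 * real n * cos (pi / real n) / (1 + cos (pi / real n)) * Re (ip \<psi> \<psi>)"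
proof -
  define c where "c = cos (pi / real n)"
  have cpos: "c > 0"
  proof -
    have "0 < pi / real n" using n3 by simp
    moreover have "pi / real n < pi / 2" using n3 pi_gt_zero by (simp add: field_simps)
    ultimately show ?thesis unfolding c_def by (rule cos_gt_zero)
  qed
  define \<kappa> where "\<kappa> = c / (1 + c)"
  define N where "N = Re (ip \<psi> \<psi>)"
  define P where "P a = Re (ip \<psi> (w a))" for a
  define s where "s a = w a + sc (complex_of_real (- 4 * \<kappa>)) \<psi>" for a
  let ?G = "\<lambda>x y. Re (ip x y)"
  have Gs: "?G (s a) (s b) = ?G (w a) (w b) - 4 * \<kappa> * P a - 4 * \<kappa> * P b + 16 * \<kappa>^2 * N" for a b
  proof -
    have "?G (s a) (s b) = ?G (w a) (w b) + ?G (sc (complex_of_real (- 4 * \<kappa>)) \<psi>) (w b)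
        + ?G (sc (complex_of_real (- 4 * \<kappa>)) \<psi>) (sc (complex_of_real (- 4 * \<kappa>)) \<psi>)
        + ?G (w a) (sc (complex_of_real (- 4 * \<kappa>)) \<psi>)"
      unfolding s_def by (simp add: hs_addL[OF H] hs_addR[OF H])
    also have "\<dots> = ?G (w a) (w b) - 4 * \<kappa> * P a - 4 * \<kappa> * P b + 16 * \<kappa>^2 * N"
      using hs_smL[OF H, of "- 4 * \<kappa>" \<psi> "w b"] hs_smL[OF H, of "- 4 * \<kappa>" \<psi> "sc (complex_of_real (- 4 * \<kappa>)) \<psi>"]
        hs_sym[OF H, of \<psi> "sc (complex_of_real (- 4 * \<kappa>)) \<psi>"]
        hs_smL[OF H, of "- 4 * \<kappa>" \<psi> \<psi>]
        hs_sym[OF H, of "w a" "sc (complex_of_real (- 4 * \<kappa>)) \<psi>"] hs_smL[OF H, of "- 4 * \<kappa>" \<psi> "w a"]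
        hs_sym[OF H, of \<psi> "w a"]
      unfolding P_def N_def by (simp add: power2_eq_square algebra_simps)
    finally show ?thesis .
  qed
  have ineq: "(\<Sum>a=1..n. c * ?G (s a) (s a) + ?G (s a) (s (cyc_succ n a))) \<ge> 0"
    unfolding c_def
    by (rule cyc_ineq[where sm = "\<lambda>r x. sc (complex_of_real r) x"],
        rule hs_sym[OF H], simp add: hs_addL[OF H], rule hs_smL[OF H], rule hs_pos[OF H], rule odd, rule n3)
  have "(\<Sum>a=1..n. c * ?G (s a) (s a) + ?G (s a) (s (cyc_succ n a)))
      = (\<Sum>a=1..n. (4*c - 8*c*\<kappa> - 4*\<kappa>) * P a - 4 * \<kappa> * P (cyc_succ n a) + 16 * \<kappa>^2 * (1 + c) * N)"
    by (intro sum.cong refl) (simp add: Gs E1 E2 P_def algebra_simps)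
  also have "\<dots> = (4*c - 8*c*\<kappa> - 4*\<kappa>) * (\<Sum>a=1..n. P a) - 4 * \<kappa> * (\<Sum>a=1..n. P (cyc_succ n a))
      + real n * (16 * \<kappa>^2 * (1 + c) * N)"
    by (simp add: sum.distrib sum_subtractf sum_distrib_left)
  also have "(\<Sum>a=1..n. P (cyc_succ n a)) = (\<Sum>a=1..n. P a)" using n3 by (intro cyc_reindex) auto
  finally have "0 \<le> (4*c - 8*c*\<kappa> - 4*\<kappa>) * (\<Sum>a=1..n. P a) - 4 * \<kappa> * (\<Sum>a=1..n. P a)
      + real n * (16 * \<kappa>^2 * (1 + c) * N)" using ineq by simp
  note fin = this
  have c1: "1 + c \<noteq> 0" "(1 + c)^2 \<noteq> 0" using cpos by auto
  have kk: "\<kappa> * (1+c) = c" using c1 by (simp add: \<kappa>_def)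
  have kk2: "8*c*\<kappa> + 8*\<kappa> = 8*c" using kk by (simp add: algebra_simps)
  have k1: "4*c - 8*c*\<kappa> - 4*\<kappa> - 4*\<kappa> = -4*c" using kk2 by linarith
  have k2: "16 * \<kappa>^2 * (1+c) = 16 * c^2/(1+c)"
  proof -
    have "\<kappa>^2 * (1+c) = c^2/(1+c)" unfolding \<kappa>_def power2_eq_square using c1 by simp
    then show ?thesis by simp
  qed
  have "0 \<le> (4*c - 8*c*\<kappa> - 4*\<kappa> - 4*\<kappa>) * (\<Sum>a=1..n. P a) + real n * (16 * \<kappa>^2 * (1 + c)) * N"
    using fin by (simp add: algebra_simps)
  then have "0 \<le> -4*c * (\<Sum>a=1..n. P a) + real n * (16 * c^2/(1+c)) * N" unfolding k1 k2 .
  then have "4 * c * (\<Sum>a=1..n. P a) \<le> 4 * c * (4 * real n * c / (1 + c) * N)"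
    by (simp add: field_simps power2_eq_square)
  then have "(\<Sum>a=1..n. P a) \<le> 4 * real n * c / (1 + c) * N"
    by (rule mult_left_le_imp_le) (use cpos in auto)
  then show ?thesis unfolding P_def N_def c_def by simp
qed



lemma hs_zeroR: assumes H: "hilbert_space sc ip" shows "ip x 0 = 0"
  using hs_addR[OF H, of x 0 0] by simp

lemma hs_sumR: assumes H: "hilbert_space sc ip" and "finite S"
  shows "ip x (\<Sum>a\<in>S. f a) = (\<Sum>a\<in>S. ip x (f a))"
  using assms(2) by (induction S rule: finite_induct) (auto simp: hs_zeroR[OF H] hs_addR[OF H])

lemma edge1:
  assumes H: "hilbert_space sc ip"
    and hA: "\<And>x y. ip (A x) y = ip x (A y)" and hB: "\<And>x y. ip (B x) y = ip x (B y)"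
    and iA: "\<And>x. A (A x) = x" and iB: "\<And>x. B (B x) = x" and cm: "\<And>x. A (B x) = B (A x)"
  shows "ip (\<psi> + A \<psi> - B \<psi> - A (B \<psi>)) (\<psi> + A \<psi> - B \<psi> - A (B \<psi>))
       = 4 * ip \<psi> (\<psi> + A \<psi> - B \<psi> - A (B \<psi>))"
proof -
  have r1: "ip (A \<psi>) \<psi> = ip \<psi> (A \<psi>)" by (rule hA)
  have r2: "ip (B \<psi>) \<psi> = ip \<psi> (B \<psi>)" by (rule hB)
  have r3: "ip (A (B \<psi>)) \<psi> = ip \<psi> (A (B \<psi>))" using hA[of "B \<psi>" \<psi>] hB[of \<psi> "A \<psi>"] cm by simp
  have r4: "ip (A \<psi>) (A \<psi>) = ip \<psi> \<psi>" using hA[of \<psi> "A \<psi>"] iA by simp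
  have r5: "ip (B \<psi>) (B \<psi>) = ip \<psi> \<psi>" using hB[of \<psi> "B \<psi>"] iB by simp
  have r6: "ip (A (B \<psi>)) (A (B \<psi>)) = ip \<psi> \<psi>" using hA[of "B \<psi>" "A (B \<psi>)"] iA r5 by simp
  have r7: "ip (A \<psi>) (B \<psi>) = ip \<psi> (A (B \<psi>))" by (rule hA)
  have r8: "ip (B \<psi>) (A \<psi>) = ip \<psi> (A (B \<psi>))" using hB[of \<psi> "A \<psi>"] cm by simp
  have r9: "ip (A \<psi>) (A (B \<psi>)) = ip \<psi> (B \<psi>)" using hA[of \<psi> "A (B \<psi>)"] iA by simp
  have r10: "ip (A (B \<psi>)) (A \<psi>) = ip \<psi> (B \<psi>)" using hA[of "B \<psi>" "A \<psi>"] iA r2 by simp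
  have r11: "ip (B \<psi>) (A (B \<psi>)) = ip \<psi> (A \<psi>)" using hB[of \<psi> "B (A \<psi>)"] iB cm by simp
  have r12: "ip (A (B \<psi>)) (B \<psi>) = ip \<psi> (A \<psi>)" using hB[of "A \<psi>" "B \<psi>"] iB cm r1 by simp
  show ?thesis
    by (simp add: hs_addL[OF H] hs_diffL[OF H] hs_addR[OF H] hs_diffR[OF H] r1 r2 r3 r4 r5 r6 r7 r8 r9 r10 r11 r12)
qed

lemma edge2:
  assumes H: "hilbert_space sc ip"
    and hB: "\<And>x y. ip (B x) y = ip x (B y)"
    and iB: "\<And>x. B (B x) = x" and cm: "\<And>x. A (B x) = B (A x)"
  shows "ip (\<psi> + A \<psi> - B \<psi> - A (B \<psi>)) (\<psi> + B \<psi> - C \<psi> - B (C \<psi>)) = 0"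
proof -
  have s1: "ip (B \<psi>) \<psi> = ip \<psi> (B \<psi>)" by (rule hB)
  have s2: "ip (B \<psi>) (B \<psi>) = ip \<psi> \<psi>" using hB[of \<psi> "B \<psi>"] iB by simp
  have s3: "ip (B \<psi>) (C \<psi>) = ip \<psi> (B (C \<psi>))" by (rule hB)
  have s4: "ip (B \<psi>) (B (C \<psi>)) = ip \<psi> (C \<psi>)" using hB[of \<psi> "B (C \<psi>)"] iB by simp
  have s5: "ip (A (B \<psi>)) \<psi> = ip (A \<psi>) (B \<psi>)" using hB[of "A \<psi>" \<psi>] cm by simp
  have s6: "ip (A (B \<psi>)) (B \<psi>) = ip (A \<psi>) \<psi>" using hB[of "A \<psi>" "B \<psi>"] cm iB by simp
  have s7: "ip (A (B \<psi>)) (C \<psi>) = ip (A \<psi>) (B (C \<psi>))" using hB[of "A \<psi>" "C \<psi>"] cm by simp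
  have s8: "ip (A (B \<psi>)) (B (C \<psi>)) = ip (A \<psi>) (C \<psi>)" using hB[of "A \<psi>" "B (C \<psi>)"] cm iB by simp
  show ?thesis
    by (simp add: hs_addL[OF H] hs_diffL[OF H] hs_addR[OF H] hs_diffR[OF H] s1 s2 s3 s4 s5 s6 s7 s8)
qed



lemma cyc_in: "a \<in> {1..n} \<Longrightarrow> cyc_succ n a \<in> {1..n}"
proof -
  assume "a \<in> {1..n}"
  then have "n > 0" by auto
  then have "a mod n < n" by simp
  then show ?thesis by (simp add: cyc_succ_def)
qed

lemma part1:
  fixes sc :: "complex \<Rightarrow> 'h::ab_group_add \<Rightarrow> 'h" and X :: "nat \<Rightarrow> 'h \<Rightarrow> 'h"
  assumes H: "hilbert_space sc ip" and odd: "odd n" and n3: "n \<ge> 3"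
    and hyp: "\<forall>a\<in>{1..n}. hermitian_op sc ip (X a) \<and> (\<forall>x. X a (X a x) = x) \<and>
                    (\<forall>x. X a (X (cyc_succ n a) x) = X (cyc_succ n a) (X a x))"
  shows "Re (ip \<psi> (\<Sum>a=1..n. X a (X (cyc_succ n a) \<psi>)))
                 \<ge> real n * (1 - 4 * cos (pi / real n) / (1 + cos (pi / real n))) * Re (ip \<psi> \<psi>)"
proof -
  let ?b = "cyc_succ n"
  have hm: "\<And>x y. ip (X a x) y = ip x (X a y)" if "a \<in> {1..n}" for a
    using hyp that unfolding hermitian_op_def by auto
  have iv: "\<And>x. X a (X a x) = x" if "a \<in> {1..n}" for a using hyp that by auto
  have cm: "\<And>x. X a (X (?b a) x) = X (?b a) (X a x)" if "a \<in> {1..n}" for a using hyp that by auto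
  define w where "w a = \<psi> + X a \<psi> - X (?b a) \<psi> - X a (X (?b a) \<psi>)" for a
  define w' where "w' a = \<psi> + X (?b a) \<psi> - X a \<psi> - X (?b a) (X a \<psi>)" for a
  define c where "c = cos (pi / real n)"
  define N where "N = Re (ip \<psi> \<psi>)"
  have S1: "(\<Sum>a=1..n. Re (ip \<psi> (w a))) \<le> 4 * real n * c / (1 + c) * N"
    unfolding c_def N_def
  proof (rule theta_bound[OF H odd n3])
    fix a assume a: "a \<in> {1..n}"
    have ba: "?b a \<in> {1..n}" using a by (rule cyc_in)
    show "Re (ip (w a) (w a)) = 4 * Re (ip \<psi> (w a))"
      unfolding w_def using edge1[where A="X a" and B="X (cyc_succ n a)", OF H hm[OF a] hm[OF ba] iv[OF a] iv[OF ba] cm[OF a], of \<psi>] by simp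
    show "Re (ip (w a) (w (?b a))) = 0"
      unfolding w_def using edge2[where A="X a" and B="X (cyc_succ n a)" and C="X (cyc_succ n (cyc_succ n a))", OF H hm[OF ba] iv[OF ba] cm[OF a], of \<psi>] by simp
  qed
  have S2: "(\<Sum>a=1..n. Re (ip \<psi> (w' a))) \<le> 4 * real n * c / (1 + c) * N"
    unfolding c_def N_def
  proof (rule theta_bound[OF H odd n3])
    fix a assume a: "a \<in> {1..n}"
    have ba: "?b a \<in> {1..n}" using a by (rule cyc_in)
    have cm': "\<And>x. X (?b a) (X a x) = X a (X (?b a) x)" using cm[OF a] by simp
    have cm2: "\<And>x. X (?b (?b a)) (X (?b a) x) = X (?b a) (X (?b (?b a)) x)" using cm[OF ba] by simp
    show "Re (ip (w' a) (w' a)) = 4 * Re (ip \<psi> (w' a))"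
      unfolding w'_def using edge1[where B="X a" and A="X (cyc_succ n a)", OF H hm[OF ba] hm[OF a] iv[OF ba] iv[OF a] cm', of \<psi>] by simp
    show "Re (ip (w' a) (w' (?b a))) = 0"
      unfolding w'_def using edge2[where A="X (cyc_succ n (cyc_succ n a))" and B="X (cyc_succ n a)" and C="X a", OF H hm[OF ba] iv[OF ba] cm2, of \<psi>]
        hs_sym[OF H, of "w' a" "w' (?b a)"] unfolding w'_def by simp
  qed
  have E3: "Re (ip \<psi> (X a (X (?b a) \<psi>))) = N - (Re (ip \<psi> (w a)) + Re (ip \<psi> (w' a))) / 2"
    if a: "a \<in> {1..n}" for a
  proof -
    have "ip \<psi> (w a) + ip \<psi> (w' a) = 2 * ip \<psi> \<psi> - 2 * ip \<psi> (X a (X (?b a) \<psi>))"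
      unfolding w_def w'_def using cm[OF a, of \<psi>]
      by (simp add: hs_addR[OF H] hs_diffR[OF H])
    then have "Re (ip \<psi> (w a)) + Re (ip \<psi> (w' a)) = 2 * N - 2 * Re (ip \<psi> (X a (X (?b a) \<psi>)))"
      unfolding N_def by (metis Re_complex_of_real minus_complex.simps(1) mult_2 plus_complex.simps(1))
    then show ?thesis by (simp add: field_simps)
  qed
  have "Re (ip \<psi> (\<Sum>a=1..n. X a (X (?b a) \<psi>))) = (\<Sum>a=1..n. Re (ip \<psi> (X a (X (?b a) \<psi>))))"
    by (simp add: hs_sumR[OF H])
  also have "\<dots> = (\<Sum>a=1..n. N - (Re (ip \<psi> (w a)) + Re (ip \<psi> (w' a))) / 2)"
    by (intro sum.cong refl E3) auto
  also have "\<dots> = real n * N - ((\<Sum>a=1..n. Re (ip \<psi> (w a))) + (\<Sum>a=1..n. Re (ip \<psi> (w' a)))) / 2"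
    by (simp add: sum_subtractf sum_divide_distrib[symmetric] sum.distrib)
  finally have eq: "Re (ip \<psi> (\<Sum>a=1..n. X a (X (?b a) \<psi>))) = real n * N - ((\<Sum>a=1..n. Re (ip \<psi> (w a))) + (\<Sum>a=1..n. Re (ip \<psi> (w' a)))) / 2" .
  have "real n * (1 - 4 * c / (1 + c)) * N = real n * N - (4 * real n * c / (1 + c) * N + 4 * real n * c / (1 + c) * N) / 2"
  proof -
    have "0 < pi / real n" using n3 by simp
    moreover have "pi / real n < pi / 2" using n3 pi_gt_zero by (simp add: field_simps)
    ultimately have "c > 0" unfolding c_def by (rule cos_gt_zero)
    have q: "4 * real n * c / (1 + c) * N = (4 * c / (1 + c)) * real n * N" by simp
    have gen: "\<And>q::real. real n * (1 - q) * N = real n * N - (q * real n * N + q * real n * N) / 2"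
      by (simp add: algebra_simps)
    show ?thesis unfolding q by (rule gen)
  qed
  moreover have "real n * N - (4 * real n * c / (1 + c) * N + 4 * real n * c / (1 + c) * N) / 2
      \<le> Re (ip \<psi> (\<Sum>a=1..n. X a (X (?b a) \<psi>)))"
  proof -
    have gg: "m - (K + K) / 2 \<le> m - (A + B) / 2" if "A \<le> K" "B \<le> K" for A B K m :: real
      using that by (simp add: field_simps)
    show ?thesis unfolding eq by (rule gg[OF S1 S2])
  qed
  ultimately show ?thesis unfolding c_def N_def by simp
qed



lemma expect_psi0: "expect M psi0 = M $ 3 $ 3"
  by (simp add: expect_def braket_def psi0_def matrix_vector_mult_def sum_3)

lemma obs_prod33: "(obs (proj u) ** obs (proj v)) $ 3 $ 3
   = 4 * u$3 * cnj (v$3) * braket u v - 2 * u$3 * cnj (u$3) - 2 * v$3 * cnj (v$3) + 1"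
  by (simp add: obs_def proj_def braket_def matrix_matrix_mult_def sum_3 algebra_simps)

lemma anti33: "(proj u ** (mat 1 - proj v) + (mat 1 - proj u) ** proj v) $ 3 $ 3
   = u$3 * cnj (u$3) + v$3 * cnj (v$3) - 2 * u$3 * cnj (v$3) * braket u v"
  by (simp add: proj_def braket_def matrix_matrix_mult_def mat_def sum_3 algebra_simps)

lemma braket_l: "braket (ket_l t p) (ket_l t q) = complex_of_real ((sin t)^2 * cos (p - q) + (cos t)^2)"
  by (simp add: braket_def ket_l_def sum_3 cos_diff power2_eq_square algebra_simps)

lemma l3: "ket_l t p $ 3 = complex_of_real (cos t)"
  by (simp add: ket_l_def)



lemma angle:
  assumes odd: "odd n" and n3: "n \<ge> 3" and a: "a \<in> {1..n}"
  shows "cos (phi_angle n a - phi_angle n (cyc_succ n a)) = - cos (pi / real n)"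
proof (cases "a < n")
  case True
  then have "cyc_succ n a = a + 1" by (simp add: cyc_succ_def)
  moreover have "phi_angle n a - phi_angle n (a+1) = pi / real n - pi"
    using n3 by (simp add: phi_angle_def field_simps)
  ultimately show ?thesis by (simp add: cos_diff)
next
  case False
  then have an: "a = n" using a by auto
  have "cyc_succ n n = 1" by (simp add: cyc_succ_def)
  moreover have "phi_angle n n - phi_angle n 1 = real (n - 2) * pi + pi / real n"
    using n3 by (simp add: phi_angle_def of_nat_diff field_simps power2_eq_square)
  moreover have "odd (n - 2)" using odd n3 by (auto elim!: oddE simp: algebra_simps)
  then have m1: "(-1::real)^(n-2) = -1" by simp
  have cs: "cos (real (n-2) * pi) = -1" by (simp only: cos_npi m1)
  have sn: "sin (real (n-2) * pi) = 0" by (simp only: sin_npi)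
  have "cos (real (n - 2) * pi + pi / real n) = - cos (pi / real n)"
    by (simp only: cos_add cs sn)
  ultimately show ?thesis using an by simp
qed

lemma cos_lower:
  assumes "n \<ge> 5"
  shows "2 * cos (pi / real n) / (1 + cos (pi / real n)) > 1 - 1 / real n"
proof -
  define x where "x = real n"
  have x5: "x \<ge> 5" using assms by (simp add: x_def)
  define c where "c = cos (pi / x)"
  define w where "w = pi / (2 * x)"
  have w0: "w \<ge> 0" using x5 by (simp add: w_def)
  have c_eq: "c = 1 - 2 * (sin w)^2" unfolding c_def using cos_double_sin[of w] x5 by (simp add: w_def)
  have "sin w \<le> w" using sin_x_le_x w0 by simp
  moreover have "sin w \<ge> 0" using w0 x5 pi_gt_zero
    by (intro sin_ge_zero) (auto simp: w_def field_simps)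
  ultimately have "(sin w)^2 \<le> w^2" by (simp add: power_mono)
  then have cge: "c \<ge> 1 - 2 * w^2" using c_eq by simp
  have pi2: "pi * pi < 16" using pi_less_4 pi_gt_zero 
  proof -
    have "pi * pi < 4 * 4" by (rule mult_strict_mono[OF pi_less_4 pi_less_4]) (use pi_gt_zero in auto)
    then show ?thesis by simp
  qed
  have q: "(x - 5) * (x + 1) \<ge> 0" using x5 by simp
  have key: "pi * pi * (x + 1) < 4 * x * x" using pi2 q x5
  proof -
    have "pi * pi * (x + 1) < 16 * (x + 1)" using x5 by (intro mult_strict_right_mono[OF pi2]) auto
    also have "\<dots> \<le> 4 * x * x" using q by (simp add: algebra_simps)
    finally show ?thesis .
  qed
  have "2 * w^2 * (x + 1) < 2" unfolding w_def using key x5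
    by (simp add: power2_eq_square field_simps)
  moreover have "(1 - 2*w^2)*(x+1) \<le> c*(x+1)" by (rule mult_right_mono[OF cge]) (use x5 in auto)
  moreover have "(1 - 2*w^2)*(x+1) = (x+1) - 2*w^2*(x+1)" by (simp add: algebra_simps)
  ultimately have "c * (x + 1) > x - 1" by linarith
  moreover have "c > 0"
  proof -
    have "0 < pi / x" using x5 by simp
    moreover have "pi / x < pi / 2" using x5 pi_gt_zero by (simp add: field_simps)
    ultimately show ?thesis unfolding c_def by (rule cos_gt_zero)
  qed
  ultimately have "2 * c / (1 + c) > 1 - 1 / x" using x5 by (simp add: field_simps)
  then show ?thesis by (simp add: c_def x_def)
qed



lemma part2:
  assumes odd: "odd n" and n3: "n \<ge> 3"
    and th: "(cos \<theta>)\<^sup>2 = cos (pi / real n) / (1 + cos (pi / real n))"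
  shows "let l = (\<lambda>a. ket_l \<theta> (phi_angle n a)) in
         (\<forall>a\<in>{1..n}. braket (l a) (l (cyc_succ n a)) = 0) \<and>
         expect (\<Sum>a=1..n. obs (proj (l a)) ** obs (proj (l (cyc_succ n a)))) psi0
           = complex_of_real (real n - 4 * real n * cos (pi / real n) / (1 + cos (pi / real n))) \<and>
         (\<forall>a\<in>{1..n}. anticorr_prob (proj (l a)) (proj (l (cyc_succ n a))) psi0
           = complex_of_real (2 * cos (pi / real n) / (1 + cos (pi / real n)))) \<and>
         (n \<ge> 5 \<longrightarrow> (\<forall>a\<in>{1..n}.
           Re (anticorr_prob (proj (l a)) (proj (l (cyc_succ n a))) psi0) > 1 - 1 / real n))"
proof -
  define c where "c = cos (pi / real n)"
  have cpos: "c > 0"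
  proof -
    have "0 < pi / real n" using n3 by simp
    moreover have "pi / real n < pi / 2" using n3 pi_gt_zero by (simp add: field_simps)
    ultimately show ?thesis unfolding c_def by (rule cos_gt_zero)
  qed
  define l where "l a = ket_l \<theta> (phi_angle n a)" for a
  have th': "(cos \<theta>)^2 = c / (1 + c)" using th by (simp add: c_def)
  have sn: "(sin \<theta>)^2 = 1 / (1 + c)"
  proof -
    have "(sin \<theta>)^2 = 1 - (cos \<theta>)^2" by (simp add: sin_squared_eq)
    also have "\<dots> = 1 / (1 + c)" unfolding th' using cpos by (simp add: field_simps)
    finally show ?thesis .
  qed
  have orth: "braket (l a) (l (cyc_succ n a)) = 0" if a: "a \<in> {1..n}" for a
  proof -
    have "braket (l a) (l (cyc_succ n a)) = complex_of_real ((sin \<theta>)^2 * (- c) + (cos \<theta>)^2)"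
      unfolding l_def braket_l angle[OF odd n3 a] c_def ..
    also have "(sin \<theta>)^2 * (- c) + (cos \<theta>)^2 = 0" unfolding sn th' using cpos by (simp add: field_simps)
    finally show ?thesis by simp
  qed
  have l33: "l a $ 3 * cnj (l a $ 3) = complex_of_real (c / (1 + c))" for a
  proof -
    have "l a $ 3 * cnj (l a $ 3) = complex_of_real ((cos \<theta>)^2)"
      unfolding l_def l3 by (simp add: power2_eq_square)
    then show ?thesis unfolding th' .
  qed
  have trm: "(obs (proj (l a)) ** obs (proj (l (cyc_succ n a)))) $ 3 $ 3 = complex_of_real (1 - 4 * c / (1 + c))"
    if a: "a \<in> {1..n}" for a
    apply (simp only: obs_prod33 orth[OF a] mult.assoc l33)
    apply (simp add: field_simps)
    done
  have exp: "expect (\<Sum>a=1..n. obs (proj (l a)) ** obs (proj (l (cyc_succ n a)))) psi0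
      = complex_of_real (real n - 4 * real n * c / (1 + c))"
  proof -
    have "expect (\<Sum>a=1..n. obs (proj (l a)) ** obs (proj (l (cyc_succ n a)))) psi0
       = (\<Sum>a=1..n. (obs (proj (l a)) ** obs (proj (l (cyc_succ n a)))) $ 3 $ 3)"
      by (simp add: expect_psi0)
    also have "\<dots> = (\<Sum>a=1..n. complex_of_real (1 - 4 * c / (1 + c)))"
      by (intro sum.cong refl trm) auto
    also have "\<dots> = complex_of_real (real n * (1 - 4 * c / (1 + c)))" by simp
    finally show ?thesis by (simp add: algebra_simps)
  qed
  have anti: "anticorr_prob (proj (l a)) (proj (l (cyc_succ n a))) psi0
      = complex_of_real (2 * c / (1 + c))" if a: "a \<in> {1..n}" for a
    unfolding anticorr_prob_def expect_psi0 anti33 orth[OF a] l33 by simp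
  have big: "n \<ge> 5 \<longrightarrow> (\<forall>a\<in>{1..n}. Re (anticorr_prob (proj (l a)) (proj (l (cyc_succ n a))) psi0) > 1 - 1 / real n)"
    using anti cos_lower unfolding c_def by simp
  show ?thesis unfolding Let_def l_def[symmetric]
    using orth exp anti big unfolding c_def by blast
qed

theorem mainTheorem5:
  fixes n :: nat
  assumes "odd n" and "n \<ge> 3"
  shows
   "(\<forall>(sc :: complex \<Rightarrow> 'h::ab_group_add \<Rightarrow> 'h) ip (X :: nat \<Rightarrow> 'h \<Rightarrow> 'h).
       hilbert_space sc ip \<and>
       (\<forall>a\<in>{1..n}. hermitian_op sc ip (X a) \<and> (\<forall>x. X a (X a x) = x) \<and>
                    (\<forall>x. X a (X (cyc_succ n a) x) = X (cyc_succ n a) (X a x)))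
       \<longrightarrow> (\<forall>\<psi>. Re (ip \<psi> (\<Sum>a=1..n. X a (X (cyc_succ n a) \<psi>)))
                 \<ge> real n * (1 - 4 * cos (pi / real n) / (1 + cos (pi / real n))) * Re (ip \<psi> \<psi>)))
    \<and>
    (\<forall>\<theta>::real. (cos \<theta>)\<^sup>2 = cos (pi / real n) / (1 + cos (pi / real n)) \<longrightarrow>
       (let l = (\<lambda>a. ket_l \<theta> (phi_angle n a)) in
         (\<forall>a\<in>{1..n}. braket (l a) (l (cyc_succ n a)) = 0) \<and>
         expect (\<Sum>a=1..n. obs (proj (l a)) ** obs (proj (l (cyc_succ n a)))) psi0
           = complex_of_real (real n - 4 * real n * cos (pi / real n) / (1 + cos (pi / real n))) \<and>
         (\<forall>a\<in>{1..n}. anticorr_prob (proj (l a)) (proj (l (cyc_succ n a))) psi0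
           = complex_of_real (2 * cos (pi / real n) / (1 + cos (pi / real n)))) \<and>
         (n \<ge> 5 \<longrightarrow> (\<forall>a\<in>{1..n}.
           Re (anticorr_prob (proj (l a)) (proj (l (cyc_succ n a))) psi0) > 1 - 1 / real n))))"
  proof (intro conjI allI impI)
  fix sc :: "complex \<Rightarrow> 'h::ab_group_add \<Rightarrow> 'h" and ip and X :: "nat \<Rightarrow> 'h \<Rightarrow> 'h" and \<psi>
  assume h: "hilbert_space sc ip \<and>
       (\<forall>a\<in>{1..n}. hermitian_op sc ip (X a) \<and> (\<forall>x. X a (X a x) = x) \<and>
                    (\<forall>x. X a (X (cyc_succ n a) x) = X (cyc_succ n a) (X a x)))"
  then show "Re (ip \<psi> (\<Sum>a=1..n. X a (X (cyc_succ n a) \<psi>)))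
                 \<ge> real n * (1 - 4 * cos (pi / real n) / (1 + cos (pi / real n))) * Re (ip \<psi> \<psi>)"
    using part1[OF _ assms(1) assms(2)] by blast
next
  fix \<theta> :: real
  assume "(cos \<theta>)\<^sup>2 = cos (pi / real n) / (1 + cos (pi / real n))"
  then show "let l = (\<lambda>a. ket_l \<theta> (phi_angle n a)) in
         (\<forall>a\<in>{1..n}. braket (l a) (l (cyc_succ n a)) = 0) \<and>
         expect (\<Sum>a=1..n. obs (proj (l a)) ** obs (proj (l (cyc_succ n a)))) psi0
           = complex_of_real (real n - 4 * real n * cos (pi / real n) / (1 + cos (pi / real n))) \<and>
         (\<forall>a\<in>{1..n}. anticorr_prob (proj (l a)) (proj (l (cyc_succ n a))) psi0
           = complex_of_real (2 * cos (pi / real n) / (1 + cos (pi / real n)))) \<and>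
         (n \<ge> 5 \<longrightarrow> (\<forall>a\<in>{1..n}.
           Re (anticorr_prob (proj (l a)) (proj (l (cyc_succ n a))) psi0) > 1 - 1 / real n))"
    by (rule part2[OF assms(1) assms(2)])
qed

end
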